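(* Let $\mathbf{C}\in\mathbb{R}^{n\times n}$, $\mathbf{c}\in\mathbb{R}^n$, and consider the linear system $\mathbf{C}\mathbf{x}=\mathbf{c}$. Let $\langle\cdot,\cdot\rangle_1$, $\langle\cdot,\cdot\rangle_2$ be two inner products on $\mathbb{R}^n$ with norms $\|\cdot\|_1,\|\cdot\|_2$, and constants $0<\underline{\gamma}\le\overline{\gamma}$ with $\underline{\gamma}\|\mathbf{x}\|_1\le\|\mathbf{x}\|_2\le\overline{\gamma}\|\mathbf{x}\|_1$ for all $\mathbf{x}\in\mathbb{R}^n$. Fix an initial guess $\mathbf{x}^0$ with residual $\mathbf{r}^0=\mathbf{c}-\mathbf{C}\mathbf{x}^0$, and for $p=1,2$ and $m\ge0$ let $\mathbf{x}^m_p\in\mathbf{x}^0+\mathrm{span}\{\mathbf{r}^0,\mathbf{C}\mathbf{r}^0,\dots,\mathbf{C}^{m-1}\mathbf{r}^0\}$ minimise the residual norm $\|\mathbf{c}-\mathbf{C}\mathbf{x}\|_p$ over this affine Krylov space, with residual $\mathbf{r}^m_p=\mathbf{c}-\mathbf{C}\mathbf{x}^m_p$. Suppose that for some $0<\sigma<1$, $\|\mathbf{r}^m_1\|_1\le\sigma^m\|\mathbf{r}^0\|_1$ for all $m\ge0$. Then for all $m\ge0$, $$\|\mathbf{r}^{m+\Delta m}_2\|_2\le\sigma^m\|\mathbf{r}^0\|_2\quad\text{for all integers }\Delta m\ge\frac{\log(\overline{\gamma}/\underline{\gamma})}{\log(\sigma^{-1})}.$$ *)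

theory Defs
  imports "HOL-Analysis.Analysis"
begin

definition is_inner_product :: "(real^'n \<Rightarrow> real^'n \<Rightarrow> real) \<Rightarrow> bool" where
  "is_inner_product ip \<longleftrightarrow>
     (\<forall>x y. ip x y = ip y x) \<and>
     (\<forall>x y z. ip (x + y) z = ip x z + ip y z) \<and>
     (\<forall>a x y. ip (a *\<^sub>R x) y = a * ip x y) \<and>
     (\<forall>x. 0 \<le> ip x x) \<and>
     (\<forall>x. ip x x = 0 \<longrightarrow> x = 0)"

definition ip_norm :: "(real^'n \<Rightarrow> real^'n \<Rightarrow> real) \<Rightarrow> real^'n \<Rightarrow> real" where
  "ip_norm ip x = sqrt (ip x x)"

definition krylov :: "real^'n^'n \<Rightarrow> real^'n \<Rightarrow> nat \<Rightarrow> (real^'n) set" where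
  "krylov C r m = span {(((*v) C) ^^ k) r | k. k < m}"

definition is_min_res :: "(real^'n \<Rightarrow> real^'n \<Rightarrow> real) \<Rightarrow> real^'n^'n \<Rightarrow> real^'n \<Rightarrow> real^'n \<Rightarrow> nat \<Rightarrow> real^'n \<Rightarrow> bool" where
  "is_min_res ip C c x0 m x \<longleftrightarrow>
     x \<in> (\<lambda>v. x0 + v) ` krylov C (c - C *v x0) m \<and>
     (\<forall>y \<in> (\<lambda>v. x0 + v) ` krylov C (c - C *v x0) m.
        ip_norm ip (c - C *v x) \<le> ip_norm ip (c - C *v y))"

end

theory Submission
  imports Defs
begin

theorem lemma4p3:
  fixes C :: "real^'n^'n" and c x0 :: "real^'n"
    and ip1 ip2 :: "real^'n \<Rightarrow> real^'n \<Rightarrow> real"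
    and gl gu \<sigma> :: real
    and x1 x2 :: "nat \<Rightarrow> real^'n"
  assumes "is_inner_product ip1" and "is_inner_product ip2"
    and "0 < gl" and "gl \<le> gu"
    and "\<forall>x. gl * ip_norm ip1 x \<le> ip_norm ip2 x \<and> ip_norm ip2 x \<le> gu * ip_norm ip1 x"
    and "\<forall>m. is_min_res ip1 C c x0 m (x1 m)"
    and "\<forall>m. is_min_res ip2 C c x0 m (x2 m)"
    and "0 < \<sigma>" and "\<sigma> < 1"
    and "\<forall>m. ip_norm ip1 (c - C *v x1 m) \<le> \<sigma> ^ m * ip_norm ip1 (c - C *v x0)"
  shows "\<forall>m dm. real dm \<ge> ln (gu / gl) / ln (1 / \<sigma>) \<longrightarrow>
           ip_norm ip2 (c - C *v x2 (m + dm)) \<le> \<sigma> ^ m * ip_norm ip2 (c - C *v x0)"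
proof (intro allI impI)
  fix m dm :: nat
  assume dm: "real dm \<ge> ln (gu / gl) / ln (1 / \<sigma>)"
  define k where "k = m + dm"
  define N1 where "N1 = ip_norm ip1 (c - C *v x0)"
  define N2 where "N2 = ip_norm ip2 (c - C *v x0)"
  have N2: "N2 \<ge> 0" using assms(2) unfolding N2_def ip_norm_def is_inner_product_def by simp
  have gu: "gu > 0" using assms(3,4) by linarith
  have l1: "ln (1/\<sigma>) > 0" using assms(8,9) by simp
  have "ln (gu / gl) \<le> real dm * ln (1/\<sigma>)" using dm l1 by (simp add: divide_le_eq)
  also have "\<dots> = - ln (\<sigma> ^ dm)" using assms(8) by (simp add: ln_realpow ln_div)
  finally have "ln (\<sigma> ^ dm) \<le> ln (gl / gu)" using assms(3) gu by (simp add: ln_div)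
  hence sd: "\<sigma> ^ dm \<le> gl / gu" using assms(3,8) gu by simp
  have mem: "x1 k \<in> (\<lambda>v. x0 + v) ` krylov C (c - C *v x0) k"
    using assms(6) unfolding is_min_res_def by blast
  have "ip_norm ip2 (c - C *v x2 k) \<le> ip_norm ip2 (c - C *v x1 k)"
    using assms(7) mem unfolding is_min_res_def by blast
  also have "\<dots> \<le> gu * ip_norm ip1 (c - C *v x1 k)" using assms(5) by blast
  also have "\<dots> \<le> gu * (\<sigma> ^ k * N1)" using assms(10) gu unfolding N1_def
    by (simp add: mult_left_mono)
  also have "\<dots> = \<sigma> ^ m * (\<sigma> ^ dm * (gu * N1))" unfolding k_def by (simp add: power_add)
  also have "\<dots> \<le> \<sigma> ^ m * (\<sigma> ^ dm * (gu * (N2 / gl)))"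
  proof -
    have "gl * N1 \<le> N2" using assms(5) unfolding N1_def N2_def by blast
    hence "N1 \<le> N2 / gl" using assms(3) by (simp add: le_divide_eq mult.commute)
    thus ?thesis using gu assms(8) by (intro mult_left_mono) auto
  qed
  also have "\<dots> \<le> \<sigma> ^ m * ((gl / gu) * (gu * (N2 / gl)))"
    using sd gu assms(3,8) N2 by (intro mult_left_mono mult_right_mono) auto
  also have "\<dots> = \<sigma> ^ m * N2" using gu assms(3) by simp
  finally show "ip_norm ip2 (c - C *v x2 (m + dm)) \<le> \<sigma> ^ m * ip_norm ip2 (c - C *v x0)"
    unfolding k_def N2_def .
qed

end
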